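(* Let $n\ge 3$, $k\ge 1$ and $p\in\{0,1,2\}$. Then \[ \gamma_{\rm S}(C_n,C_{3k+p})\in \begin{cases} \{kn\}, & p=0,\\ \{kn,\;kn+1\}, & p=1,\\ \{kn+\lfloor n/2\rfloor,\; kn+\lfloor n/2\rfloor+1\}, & p=2. \end{cases} \] Moreover, if $n\equiv 0 \pmod 4$, then $\gamma_{\rm S}(C_n,C_{3k+1})=kn$ and $\gamma_{\rm S}(C_n,C_{3k+2})=kn+\lfloor n/2\rfloor$.
   Context: $C_m$ denotes the cycle on $m$ vertices; $\gamma$ denotes the domination number. For graphs $G,H$ and a function $f\colon V(G)\to V(H)$, the Sierpiński product $G\otimes_f H$ is the graph with vertex set $V(G)\times V(H)$ and edges of two types: (type 1) $(g,h)(g,h')$ for every $g\in V(G)$ and every edge $hh'\in E(H)$; (type 2) $(g,f(g'))(g',f(g))$ for every edge $gg'\in E(G)$. The Sierpiński domination number is $\gamma_{\rm S}(G,H)=\min_{f}\gamma(G\otimes_f H)$ over all functions $f\colon V(G)\to V(H)$. *)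

theory Defs
  imports Main "HOL-Library.FuncSet"
begin

record 'a graph =
  verts :: "'a set"
  adj :: "'a \<Rightarrow> 'a \<Rightarrow> bool"

definition cycle_graph :: "nat \<Rightarrow> nat graph" where
  "cycle_graph m = \<lparr> verts = {0..<m},
     adj = (\<lambda>i j. i < m \<and> j < m \<and> (Suc i mod m = j \<or> Suc j mod m = i)) \<rparr>"

definition sierpinski_product :: "'a graph \<Rightarrow> 'b graph \<Rightarrow> ('a \<Rightarrow> 'b) \<Rightarrow> ('a \<times> 'b) graph" where
  "sierpinski_product G H f = \<lparr> verts = verts G \<times> verts H,
     adj = (\<lambda>(g,h) (g',h').
        (g \<in> verts G \<and> g = g' \<and> adj H h h') \<or>
        (adj G g g' \<and> h = f g' \<and> h' = f g)) \<rparr>"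

definition dominating_set :: "'a graph \<Rightarrow> 'a set \<Rightarrow> bool" where
  "dominating_set G D \<longleftrightarrow> D \<subseteq> verts G \<and>
     (\<forall>v \<in> verts G. v \<in> D \<or> (\<exists>u \<in> D. adj G u v))"

definition domination_number :: "'a graph \<Rightarrow> nat" where
  "domination_number G = (LEAST k. \<exists>D. dominating_set G D \<and> finite D \<and> card D = k)"

definition sierpinski_domination_number :: "'a graph \<Rightarrow> 'b graph \<Rightarrow> nat" where
  "sierpinski_domination_number G H =
     (LEAST k. \<exists>f \<in> verts G \<rightarrow>\<^sub>E verts H. domination_number (sierpinski_product G H f) = k)"

end

theory Submission
  imports Defs
begin

abbreviation SP :: "nat \<Rightarrow> nat \<Rightarrow> (nat \<Rightarrow> nat) \<Rightarrow> (nat \<times> nat) graph" where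
  "SP n m f \<equiv> sierpinski_product (cycle_graph n) (cycle_graph m) f"

lemma verts_SP: "verts (SP n m f) = {0..<n} \<times> {0..<m}"
  by (simp add: sierpinski_product_def cycle_graph_def)

lemma adj_SP: "adj (SP n m f) (g1,h1) (g2,h2) \<longleftrightarrow>
   (g1 < n \<and> g1 = g2 \<and> h1 < m \<and> h2 < m \<and> (Suc h1 mod m = h2 \<or> Suc h2 mod m = h1)) \<or>
   (g1 < n \<and> g2 < n \<and> (Suc g1 mod n = g2 \<or> Suc g2 mod n = g1) \<and> h1 = f g2 \<and> h2 = f g1)"
  by (simp add: sierpinski_product_def cycle_graph_def)

lemma dn_le: "dominating_set G D \<Longrightarrow> finite D \<Longrightarrow> domination_number G \<le> card D"
  unfolding domination_number_def by (rule Least_le) auto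

lemma dn_ge:
  assumes "finite (verts G)" "\<And>D. dominating_set G D \<Longrightarrow> finite D \<Longrightarrow> L \<le> card D"
  shows "L \<le> domination_number G"
proof -
  have "dominating_set G (verts G)" by (simp add: dominating_set_def)
  then have ex: "\<exists>k D. dominating_set G D \<and> finite D \<and> card D = k" using assms(1) by blast
  have "\<exists>D. dominating_set G D \<and> finite D \<and> card D = domination_number G"
    unfolding domination_number_def using ex by (rule LeastI_ex)
  then show ?thesis using assms(2) by metis
qed

lemma sdn_le:
  assumes "f \<in> verts G \<rightarrow>\<^sub>E verts H" "domination_number (sierpinski_product G H f) \<le> U"
  shows "sierpinski_domination_number G H \<le> U"
proof -
  have "sierpinski_domination_number G H \<le> domination_number (sierpinski_product G H f)"
    unfolding sierpinski_domination_number_def by (rule Least_le) (use assms in auto)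
  then show ?thesis using assms by simp
qed

lemma sdn_ge:
  assumes "f0 \<in> verts G \<rightarrow>\<^sub>E verts H"
    "\<And>f. f \<in> verts G \<rightarrow>\<^sub>E verts H \<Longrightarrow> L \<le> domination_number (sierpinski_product G H f)"
  shows "L \<le> sierpinski_domination_number G H"
proof -
  have "\<exists>f \<in> verts G \<rightarrow>\<^sub>E verts H. domination_number (sierpinski_product G H f) = sierpinski_domination_number G H"
    unfolding sierpinski_domination_number_def by (rule LeastI_ex) (use assms in auto)
  then show ?thesis using assms by metis
qed

definition cpred :: "nat \<Rightarrow> nat \<Rightarrow> nat" where "cpred n g = (g + n - 1) mod n"
definition csuc :: "nat \<Rightarrow> nat \<Rightarrow> nat" where "csuc n g = Suc g mod n"

lemma cpred_eq: "g1 < n \<Longrightarrow> Suc g1 mod n = g \<Longrightarrow> g1 = cpred n g"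
  unfolding cpred_def
proof -
  assume a: "g1 < n" "Suc g1 mod n = g"
  show "g1 = (g + n - 1) mod n"
  proof (cases "Suc g1 = n")
    case True
    then have "g = 0" using a by simp
    then show ?thesis using True by simp
  next
    case False
    then have "g = Suc g1" using a by simp
    then have "g + n - 1 = g1 + n" by simp
    then show ?thesis using a by simp
  qed
qed

lemma csuc_cpred: "g < n \<Longrightarrow> csuc n (cpred n g) = g"
  unfolding csuc_def cpred_def
  by (cases g) (auto simp: mod_Suc)

lemma cpred_csuc: "g < n \<Longrightarrow> cpred n (csuc n g) = g"
  using cpred_eq[of g n "csuc n g"] by (simp add: csuc_def)

lemma cpred_lt: "0 < n \<Longrightarrow> cpred n g < n" by (simp add: cpred_def)
lemma csuc_lt: "0 < n \<Longrightarrow> csuc n g < n" by (simp add: csuc_def)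

lemma hpred: "h1 < m \<Longrightarrow> h < m \<Longrightarrow> Suc h mod m = h1 \<Longrightarrow> h = (h1 + m - 1) mod m"
  using cpred_eq[of h m h1] by (simp add: cpred_def)

definition NB :: "nat \<Rightarrow> nat set \<Rightarrow> nat set" where
  "NB m A = A \<union> (\<lambda>h. Suc h mod m) ` A \<union> (\<lambda>h. (h + m - 1) mod m) ` A"

lemma card_NB: "finite A \<Longrightarrow> card (NB m A) \<le> 3 * card A"
proof -
  assume fA: "finite A"
  have "card (NB m A) \<le> card (A \<union> (\<lambda>h. Suc h mod m) ` A) + card ((\<lambda>h. (h + m - 1) mod m) ` A)"
    unfolding NB_def by (rule card_Un_le)
  also have "\<dots> \<le> card A + card ((\<lambda>h. Suc h mod m) ` A) + card ((\<lambda>h. (h + m - 1) mod m) ` A)"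
    using card_Un_le[of A "(\<lambda>h. Suc h mod m) ` A"] by simp
  also have "\<dots> \<le> 3 * card A" using card_image_le[OF fA, of "\<lambda>h. Suc h mod m"]
      card_image_le[OF fA, of "\<lambda>h. (h + m - 1) mod m"] by simp
  finally show ?thesis .
qed

lemma finite_NB: "finite A \<Longrightarrow> finite (NB m A)" by (simp add: NB_def)

lemma fiber_cover:
  assumes dom: "dominating_set (SP n m f) D" and g: "g < n"
  shows "{0..<m} \<subseteq> NB m {h. (g,h) \<in> D} \<union> {f (cpred n g), f (csuc n g)}"
proof
  fix h assume "h \<in> {0..<m}"
  then have h: "h < m" by simp
  then have "(g,h) \<in> verts (SP n m f)" using g by (simp add: verts_SP)
  then have "(g,h) \<in> D \<or> (\<exists>u \<in> D. adj (SP n m f) u (g,h))" using dom unfolding dominating_set_def by blast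
  then show "h \<in> NB m {h. (g,h) \<in> D} \<union> {f (cpred n g), f (csuc n g)}"
  proof
    assume "(g,h) \<in> D" then show ?thesis by (simp add: NB_def)
  next
    assume "\<exists>u \<in> D. adj (SP n m f) u (g,h)"
    then obtain g1 h1 where u: "(g1,h1) \<in> D" "adj (SP n m f) (g1,h1) (g,h)" by auto
    from u(2) consider
        "g1 = g" "h1 < m" "Suc h1 mod m = h"
      | "g1 = g" "h1 < m" "Suc h mod m = h1"
      | "g1 < n" "Suc g1 mod n = g" "h = f g1"
      | "Suc g mod n = g1" "h = f g1"
      unfolding adj_SP by blast
    then show ?thesis
    proof cases
      case 1 then show ?thesis using u(1) unfolding NB_def by auto
    next
      case 2
      then have "h = (h1 + m - 1) mod m" using hpred h by blast
      then show ?thesis using u(1) 2 unfolding NB_def by auto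
    next
      case 3 then show ?thesis using cpred_eq[of g1 n g] by auto
    next
      case 4 then show ?thesis by (auto simp: csuc_def)
    qed
  qed
qed

lemma Dg_sub: "dominating_set (SP n m f) D \<Longrightarrow> {h. (g,h) \<in> D} \<subseteq> {0..<m}"
  unfolding dominating_set_def verts_SP by auto

lemma fiber_ge:
  assumes dom: "dominating_set (SP n m f) D" and g: "g < n" and m: "m = 3*k + p" "p \<le> 2"
  shows "k \<le> card {h. (g,h) \<in> D}"
proof -
  let ?A = "{h. (g,h) \<in> D}"
  have fA: "finite ?A" using Dg_sub[OF dom] finite_subset by blast
  have "m = card {0..<m}" by simp
  also have "\<dots> \<le> card (NB m ?A \<union> {f (cpred n g), f (csuc n g)})"
    using fiber_cover[OF dom g] by (intro card_mono) (auto intro: finite_NB[OF fA])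
  also have "\<dots> \<le> card (NB m ?A) + card {f (cpred n g), f (csuc n g)}" by (rule card_Un_le)
  also have "\<dots> \<le> 3 * card ?A + 2" using card_NB[OF fA, of m] card_insert_le[of "{f (csuc n g)}"]
    by (simp add: card_insert_if)
  finally show ?thesis using m by linarith
qed

lemma fiber_tight:
  assumes dom: "dominating_set (SP n m f) D" and g: "g < n" and m: "m = 3*k + 2"
    and c: "card {h. (g,h) \<in> D} \<le> k"
  shows "(g, f (cpred n g)) \<notin> D" "(csuc n g, f g) \<in> D"
proof -
  let ?A = "{h. (g,h) \<in> D}"
  let ?a = "f (cpred n g)" and ?b = "f (csuc n g)"
  let ?X = "({?a, ?b} \<inter> {0..<m}) - NB m ?A"
  have fA: "finite ?A" using Dg_sub[OF dom] finite_subset by blast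
  have "m = card {0..<m}" by simp
  also have "\<dots> \<le> card (NB m ?A \<union> ?X)"
  proof (rule card_mono)
    show "finite (NB m ?A \<union> ?X)" using finite_NB[OF fA] by simp
    show "{0..<m} \<subseteq> NB m ?A \<union> ?X" using fiber_cover[OF dom g] by blast
  qed
  also have "\<dots> \<le> card (NB m ?A) + card ?X" by (rule card_Un_le)
  also have "\<dots> \<le> 3 * k + card ?X" using card_NB[OF fA, of m] c by simp
  finally have X2: "2 \<le> card ?X" using m by simp
  have sub: "?X \<subseteq> {?a, ?b}" by auto
  have c1: "card ?X \<le> card {?a, ?b}" by (rule card_mono) auto
  have c2: "card {?a, ?b} \<le> 2" by (simp add: card_insert_if)
  have eqc: "card ?X = card {?a, ?b}" using c1 c2 X2 by linarith
  have X: "?X = {?a, ?b}" using card_subset_eq[OF _ sub eqc] by simp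
  have "card {?a, ?b} = 2" using eqc c2 X2 by linarith
  then have ne: "?a \<noteq> ?b" by (cases "?a = ?b") simp_all
  have ab: "?a \<notin> NB m ?A" "?b \<notin> NB m ?A" "?b < m"
  proof -
    have "?a \<in> ?X" "?b \<in> ?X" using X by blast+
    then show "?a \<notin> NB m ?A" "?b \<notin> NB m ?A" by blast+
    have "?b \<in> {0..<m}" using \<open>?b \<in> ?X\<close> by blast
    then show "?b < m" by (simp only: atLeastLessThan_iff)
  qed
  show "(g, ?a) \<notin> D" using ab unfolding NB_def by blast
  have "(g, ?b) \<in> verts (SP n m f)" using g ab by (simp add: verts_SP)
  moreover have "(g, ?b) \<notin> D" using ab unfolding NB_def by blast
  ultimately have "\<exists>u \<in> D. adj (SP n m f) u (g,?b)"
    using dom unfolding dominating_set_def by blast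
  then obtain g1 h1 where u: "(g1,h1) \<in> D" "adj (SP n m f) (g1,h1) (g,?b)" by auto
  from u(2) consider
        "g1 = g" "h1 < m" "Suc h1 mod m = ?b"
      | "g1 = g" "h1 < m" "Suc ?b mod m = h1"
      | "g1 < n" "Suc g1 mod n = g" "?b = f g1"
      | "Suc g mod n = g1" "h1 = f g"
      unfolding adj_SP by blast
  then show "(csuc n g, f g) \<in> D"
  proof cases
    case 1
    then have "?b \<in> (\<lambda>h. Suc h mod m) ` ?A" using u(1) by (intro image_eqI[of _ _ h1]) auto
    then show ?thesis using ab unfolding NB_def by blast
  next
    case 2
    then have "?b = (h1 + m - 1) mod m" using hpred ab by blast
    then have "?b \<in> (\<lambda>h. (h + m - 1) mod m) ` ?A" using u(1) 2 by (intro image_eqI[of _ _ h1]) auto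
    then show ?thesis using ab unfolding NB_def by blast
  next
    case 3 then show ?thesis using cpred_eq[of g1 n g] ne by auto
  next
    case 4 then show ?thesis using u(1) by (auto simp: csuc_def)
  qed
qed

lemma sum_ind: "finite A \<Longrightarrow> (\<Sum>g\<in>A. (if g \<in> B then 0 else 1::nat)) = card (A - B)"
  by (simp add: sum.If_cases Diff_eq)

lemma card_D_sum:
  assumes dom: "dominating_set (SP n m f) D"
  shows "card D = (\<Sum>g\<in>{0..<n}. card {h. (g,h) \<in> D})"
proof -
  have sub: "D \<subseteq> {0..<n} \<times> {0..<m}" using dom unfolding dominating_set_def verts_SP by simp
  have eq: "D = Sigma {0..<n} (\<lambda>g. {h. (g,h) \<in> D})" using sub by blast
  have fin: "\<forall>g \<in> {0..<n}. finite {h. (g,h) \<in> D}"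
    using Dg_sub[OF dom] finite_subset by blast
  have "card (Sigma {0..<n} (\<lambda>g. {h. (g,h) \<in> D})) = (\<Sum>g\<in>{0..<n}. card {h. (g,h) \<in> D})"
    using card_SigmaI[OF finite_atLeastLessThan fin] .
  then show ?thesis using eq by metis
qed

lemma indep_card:
  assumes T: "T \<subseteq> {0..<n}" and ind: "\<And>g. g \<in> T \<Longrightarrow> csuc n g \<notin> T" and n: "0 < n"
  shows "n - n div 2 \<le> card ({0..<n} - T)"
proof -
  have "inj_on (csuc n) T"
  proof (rule inj_onI)
    fix x y assume "x \<in> T" "y \<in> T" "csuc n x = csuc n y"
    then show "x = y" using T cpred_csuc[of x n] cpred_csuc[of y n] by force
  qed
  moreover have "csuc n ` T \<subseteq> {0..<n} - T" using ind csuc_lt[OF n] by auto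
  ultimately have "card T \<le> card ({0..<n} - T)"
    by (intro card_inj_on_le) auto
  moreover have "card T + card ({0..<n} - T) = n"
  proof -
    have f: "finite T" using T finite_subset by blast
    have "card ({0..<n} - T) = n - card T" using card_Diff_subset[OF f T] by simp
    moreover have "card T \<le> n" using card_mono[OF _ T] by simp
    ultimately show ?thesis by simp
  qed
  ultimately show ?thesis by linarith
qed

lemma lower:
  assumes dom: "dominating_set (SP n m f) D" and n: "0 < n" and m: "m = 3*k + p" "p \<le> 2"
  shows "k*n + (if p = 2 then n - n div 2 else 0) \<le> card D"
proof -
  let ?c = "\<lambda>g. card {h. (g,h) \<in> D}"
  let ?T = "{g \<in> {0..<n}. ?c g \<le> k}"
  have ge: "\<And>g. g \<in> {0..<n} \<Longrightarrow> k + (if g \<in> ?T then 0 else 1) \<le> ?c g"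
    using fiber_ge[OF dom _ m] by fastforce
  have "k*n + card ({0..<n} - ?T) = (\<Sum>g\<in>{0..<n}. k + (if g \<in> ?T then 0 else 1))"
    unfolding sum.distrib sum_ind[OF finite_atLeastLessThan] by simp
  also have "\<dots> \<le> (\<Sum>g\<in>{0..<n}. ?c g)" by (rule sum_mono) (rule ge)
  also have "\<dots> = card D" using card_D_sum[OF dom] by simp
  finally have main: "k*n + card ({0..<n} - ?T) \<le> card D" .
  show ?thesis
  proof (cases "p = 2")
    case False then show ?thesis using main by simp
  next
    case True
    have "\<And>g. g \<in> ?T \<Longrightarrow> csuc n g \<notin> ?T"
    proof
      fix g assume g: "g \<in> ?T" and s: "csuc n g \<in> ?T"
      have m2: "m = 3*k+2" using m True by simp
      from g have "(csuc n g, f g) \<in> D" using fiber_tight(2)[OF dom _ m2] by auto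
      moreover from s have "(csuc n g, f (cpred n (csuc n g))) \<notin> D" using fiber_tight(1)[OF dom _ m2] by auto
      ultimately show False using g cpred_csuc by auto
    qed
    then have "n - n div 2 \<le> card ({0..<n} - ?T)" using indep_card[of ?T n] n by blast
    then show ?thesis using main True by simp
  qed
qed

lemma dom_generic:
  assumes S: "\<And>g. g < n \<Longrightarrow> S g \<subseteq> {0..<m}"
    and cover: "\<And>g h. g < n \<Longrightarrow> h < m \<Longrightarrow> h \<in> S g \<or> (\<exists>u \<in> S g. Suc u mod m = h \<or> Suc h mod m = u)
        \<or> (\<exists>g'. g' < n \<and> (Suc g' mod n = g \<or> Suc g mod n = g') \<and> f g' = h \<and> f g \<in> S g')"
  shows "dominating_set (SP n m f) (Sigma {0..<n} S)"
  unfolding dominating_set_def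
proof (intro conjI ballI)
  show "Sigma {0..<n} S \<subseteq> verts (SP n m f)"
  proof
    fix x assume "x \<in> Sigma {0..<n} S"
    then obtain a b where x: "x = (a,b)" "a < n" "b \<in> S a" by auto
    then have "b < m" using S[OF x(2)] by auto
    then show "x \<in> verts (SP n m f)" using x by (simp add: verts_SP)
  qed
next
  fix v assume "v \<in> verts (SP n m f)"
  then obtain g h where v: "v = (g,h)" "g < n" "h < m" by (auto simp: verts_SP)
  from cover[OF v(2,3)] show "v \<in> Sigma {0..<n} S \<or> (\<exists>u \<in> Sigma {0..<n} S. adj (SP n m f) u v)"
  proof (elim disjE)
    assume "h \<in> S g" then show ?thesis using v by auto
  next
    assume "\<exists>u \<in> S g. Suc u mod m = h \<or> Suc h mod m = u"
    then obtain u where u: "u \<in> S g" "Suc u mod m = h \<or> Suc h mod m = u" by blast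
    have "u < m" using S[OF v(2)] u(1) by auto
    then have "adj (SP n m f) (g,u) (g,h)" using u(2) v by (simp add: adj_SP)
    moreover have "(g,u) \<in> Sigma {0..<n} S" using u(1) v by simp
    ultimately show ?thesis using v by blast
  next
    assume "\<exists>g'. g' < n \<and> (Suc g' mod n = g \<or> Suc g mod n = g') \<and> f g' = h \<and> f g \<in> S g'"
    then obtain g' where g': "g' < n" "Suc g' mod n = g \<or> Suc g mod n = g'" "f g' = h" "f g \<in> S g'" by blast
    then have "adj (SP n m f) (g', f g) (g,h)" using v by (simp add: adj_SP)
    moreover have "(g', f g) \<in> Sigma {0..<n} S" using g' by simp
    ultimately show ?thesis using v by blast
  qed
qed

definition Sline :: "nat \<Rightarrow> nat \<Rightarrow> nat set" where
  "Sline c r = (\<lambda>i. 3*i + c) ` {..<r}"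

lemma card_Sline: "card (Sline c r) = r"
  unfolding Sline_def by (subst card_image) (auto simp: inj_on_def)

lemma Sline_mem: "i < r \<Longrightarrow> 3*i + c \<in> Sline c r"
  unfolding Sline_def by auto

lemma Sline_sub: "3*r + c \<le> m + 2 \<Longrightarrow> Sline c r \<subseteq> {0..<m}"
  unfolding Sline_def by auto

lemma Sline_cover:
  assumes "c \<le> h + 1" "h + 2 \<le> 3*r + c" "3*r + c \<le> m + 2" "h < m"
  shows "h \<in> Sline c r \<or> (\<exists>u \<in> Sline c r. Suc u mod m = h \<or> Suc h mod m = u)"
proof -
  define j where "j = (h + 1 - c) div 3"
  define t where "t = (h + 1 - c) mod 3"
  have ht: "h + 1 - c = 3*j + t" "t < 3" unfolding j_def t_def by auto
  have jr: "j < r" using assms ht by linarith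
  have u: "3*j + c \<in> Sline c r" using Sline_mem[OF jr] .
  have um: "3*j + c < m" using assms ht jr by linarith
  consider "t = 0" | "t = 1" | "t = 2" using ht by linarith
  then show ?thesis
  proof cases
    case 1
    then have "Suc h = 3*j + c" using ht assms by linarith
    then have "Suc h mod m = 3*j + c" using um by simp
    then show ?thesis using u by (intro disjI2 bexI[of _ "3*j + c"]) simp_all
  next
    case 2
    then have "h = 3*j + c" using ht assms by linarith
    then show ?thesis using u by simp
  next
    case 3
    then have "h = Suc (3*j + c)" using ht assms by linarith
    then have e: "Suc (3*j + c) mod m = h" using assms(4) by simp
    show ?thesis using u e by blast
  qed
qed

lemma Sline_0_notin: "4 \<le> c \<Longrightarrow> 0 \<notin> Sline c r"
  unfolding Sline_def by auto

lemma cpred_pos: "0 < g \<Longrightarrow> g < n \<Longrightarrow> cpred n g = g - 1"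
  using cpred_eq[of "g - 1" n g] by simp

lemma cpred_0: "0 < n \<Longrightarrow> cpred n 0 = n - 1"
  using cpred_eq[of "n - 1" n 0] by simp
lemma csuc_lt': "Suc g < n \<Longrightarrow> csuc n g = Suc g"
  unfolding csuc_def by simp
lemma csuc_last: "0 < n \<Longrightarrow> csuc n (n - 1) = 0"
  unfolding csuc_def by (cases n) auto

lemma dn_Sigma_le:
  assumes "dominating_set (SP n m f) (Sigma {0..<n} S)" "\<And>g. g < n \<Longrightarrow> finite (S g)"
  shows "domination_number (SP n m f) \<le> (\<Sum>g\<in>{0..<n}. card (S g))"
proof -
  have "domination_number (SP n m f) \<le> card (Sigma {0..<n} S)"
    by (rule dn_le[OF assms(1)]) (use assms(2) in auto)
  also have "\<dots> = (\<Sum>g\<in>{0..<n}. card (S g))" by (rule card_SigmaI) (use assms(2) in auto)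
  finally show ?thesis .
qed

lemma F_PiE:
  assumes "\<And>g. g < n \<Longrightarrow> F g < m" "\<And>g. \<not> g < n \<Longrightarrow> F g = undefined"
  shows "F \<in> verts (cycle_graph n) \<rightarrow>\<^sub>E verts (cycle_graph m)"
  using assms by (auto simp: cycle_graph_def PiE_def extensional_def Pi_def)

lemma upper0:
  assumes n: "0 < n" and k: "1 \<le> k"
  shows "sierpinski_domination_number (cycle_graph n) (cycle_graph (3*k)) \<le> k*n"
proof -
  define F :: "nat \<Rightarrow> nat" where "F = (\<lambda>g. if g < n then 0 else undefined)"
  define m where "m = 3*k"
  let ?S = "\<lambda>g::nat. Sline 1 k"
  have FP: "F \<in> verts (cycle_graph n) \<rightarrow>\<^sub>E verts (cycle_graph m)"
    by (rule F_PiE) (use k in \<open>auto simp: F_def m_def\<close>)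
  have "dominating_set (SP n m F) (Sigma {0..<n} ?S)"
  proof (rule dom_generic)
    show "\<And>g. g < n \<Longrightarrow> ?S g \<subseteq> {0..<m}" by (rule Sline_sub) (simp add: m_def)
    fix g h assume "g < n" "h < m"
    then show "h \<in> ?S g \<or> (\<exists>u \<in> ?S g. Suc u mod m = h \<or> Suc h mod m = u)
        \<or> (\<exists>g'. g' < n \<and> (Suc g' mod n = g \<or> Suc g mod n = g') \<and> F g' = h \<and> F g \<in> ?S g')"
    proof -
      have "h \<in> ?S g \<or> (\<exists>u \<in> ?S g. Suc u mod m = h \<or> Suc h mod m = u)"
        using Sline_cover[of 1 h k m] \<open>h < m\<close> by (simp add: m_def)
      then show ?thesis by blast
    qed
  qed
  then have "domination_number (SP n m F) \<le> (\<Sum>g\<in>{0..<n}. card (?S g))"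
    by (rule dn_Sigma_le) (simp add: Sline_def)
  also have "\<dots> = k*n" by (simp add: card_Sline)
  finally show ?thesis using sdn_le[OF FP] by (simp add: m_def)
qed

lemma sum_tight:
  assumes "\<And>g. g < n \<Longrightarrow> card (S g) = k + (if g \<in> T then 0 else 1)"
  shows "(\<Sum>g\<in>{0..<n}. card (S g)) = k*n + card ({0..<n} - T)"
proof -
  have "(\<Sum>g\<in>{0..<n}. card (S g)) = (\<Sum>g\<in>{0..<n}. k + (if g \<in> T then 0 else 1))"
    by (rule sum.cong) (use assms in auto)
  also have "\<dots> = k*n + card ({0..<n} - T)"
    unfolding sum.distrib sum_ind[OF finite_atLeastLessThan] by simp
  finally show ?thesis .
qed

lemma or3: "P \<or> Q \<Longrightarrow> P \<or> Q \<or> R" by blast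
lemma or3c: "R \<Longrightarrow> P \<or> Q \<or> R" by blast

lemma upper1_gen:
  fixes F :: "nat \<Rightarrow> nat"
  assumes n: "0 < n" and k: "1 \<le> k" and T: "T \<subseteq> {0..<n}"
    and Fd: "F = (\<lambda>g. if g < n then (if (g div 2) mod 2 = 0 then 0 else 2) else undefined)"
    and H: "\<And>g. g \<in> T \<Longrightarrow> (if cpred n g \<in> T then F g \<noteq> F (cpred n (cpred n g)) else F g = 0)"
  shows "sierpinski_domination_number (cycle_graph n) (cycle_graph (3*k+1)) \<le> k*n + card ({0..<n} - T)"
proof -
  define m where "m = 3*k+1"
  define S where "S = (\<lambda>g. if g \<in> T then (if F (cpred n g) = 0 then Sline 2 k else insert 0 (Sline 4 (k-1)))
     else Sline 0 (k+1))"
  have FV: "\<And>g. g < n \<Longrightarrow> F g = 0 \<or> F g = 2" using Fd by simp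
  have FP: "F \<in> verts (cycle_graph n) \<rightarrow>\<^sub>E verts (cycle_graph m)"
    by (rule F_PiE) (use k in \<open>auto simp: Fd m_def\<close>)
  have S2: "Sline 2 k \<subseteq> {0..<m}" by (rule Sline_sub) (simp add: m_def)
  have S4: "Sline 4 (k-1) \<subseteq> {0..<m}" by (rule Sline_sub) (use k in \<open>simp add: m_def\<close>)
  have S0: "Sline 0 (k+1) \<subseteq> {0..<m}" by (rule Sline_sub) (simp add: m_def)
  have "dominating_set (SP n m F) (Sigma {0..<n} S)"
  proof (rule dom_generic)
    show "\<And>g. g < n \<Longrightarrow> S g \<subseteq> {0..<m}" using S2 S4 S0 by (simp add: S_def m_def)
    fix g h assume g: "g < n" and h: "h < m"
    show "h \<in> S g \<or> (\<exists>u \<in> S g. Suc u mod m = h \<or> Suc h mod m = u)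
        \<or> (\<exists>g'. g' < n \<and> (Suc g' mod n = g \<or> Suc g mod n = g') \<and> F g' = h \<and> F g \<in> S g')"
    proof (cases "g \<in> T")
      case False
      then have "h \<in> S g \<or> (\<exists>u \<in> S g. Suc u mod m = h \<or> Suc h mod m = u)"
        using Sline_cover[of 0 h "k+1" m] h by (simp add: S_def m_def)
      then show ?thesis by (rule or3)
    next
      case True
      define g' where "g' = cpred n g"
      have g'n: "g' < n" using cpred_lt[OF n] by (simp add: g'_def)
      have sg': "Suc g' mod n = g" using csuc_cpred[OF g] by (simp add: g'_def csuc_def)
      show ?thesis
      proof (cases "h = F g'")
        case hF: True
        have "F g \<in> S g'"
        proof (cases "g' \<in> T")
          case True
          then have ne: "F g \<noteq> F (cpred n g')" using H[OF \<open>g \<in> T\<close>] by (simp add: g'_def)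
          have "cpred n g' < n" using cpred_lt[OF n] .
          then consider "F (cpred n g') = 0" "F g = 2" | "F (cpred n g') = 2" "F g = 0"
            using FV[OF g] FV ne by fastforce
          then show ?thesis
          proof cases
            case 1
            have "(2::nat) \<in> Sline 2 k" unfolding Sline_def using k by (intro image_eqI[of _ _ 0]) auto
            then show ?thesis using 1 True by (simp add: S_def)
          next
            case 2 then show ?thesis using True by (simp add: S_def)
          qed
        next
          case False
          then have "F g = 0" using H[OF \<open>g \<in> T\<close>] by (simp add: g'_def)
          then show ?thesis using False Sline_mem[of 0 "k+1" 0] by (simp add: S_def)
        qed
        then show ?thesis using g'n sg' hF by blast
      next
        case hF: False
        have Sg: "S g = (if F g' = 0 then Sline 2 k else insert 0 (Sline 4 (k-1)))"
          using True by (simp add: S_def g'_def)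
        have "h \<in> S g \<or> (\<exists>u \<in> S g. Suc u mod m = h \<or> Suc h mod m = u)"
        proof (cases "F g' = 0")
          case True
          then show ?thesis using Sline_cover[of 2 h k m] h hF Sg by (simp add: m_def)
        next
          case False
          then have F2: "F g' = 2" using FV[OF g'n] by simp
          then have Sg': "S g = insert 0 (Sline 4 (k-1))" using Sg by simp
          have m4: "4 \<le> m" using k by (simp add: m_def)
          consider "h = 0" | "h = 1" | "h = 3*k" | "3 \<le> h" "h < 3*k"
            using hF F2 h by (simp add: m_def) linarith
          then show ?thesis
          proof cases
            case 1 then show ?thesis using Sg' by simp
          next
            case 2 then show ?thesis using Sg' m4 by simp
          next
            case 3 then have "Suc h mod m = 0" by (simp add: m_def)
            moreover have "0 \<in> S g" using Sg' by simp
            ultimately show ?thesis by (intro disjI2 bexI[of _ 0]) simp_all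
          next
            case 4
            then have "h \<in> Sline 4 (k-1) \<or> (\<exists>u \<in> Sline 4 (k-1). Suc u mod m = h \<or> Suc h mod m = u)"
              using Sline_cover[of 4 h "k-1" m] h k by (simp add: m_def)
            then show ?thesis unfolding Sg' by blast
          qed
        qed
        then show ?thesis by (rule or3)
      qed
    qed
  qed
  then have "domination_number (SP n m F) \<le> (\<Sum>g\<in>{0..<n}. card (S g))"
    by (rule dn_Sigma_le) (simp add: S_def Sline_def)
  also have "\<dots> = k*n + card ({0..<n} - T)"
  proof (rule sum_tight)
    fix g assume "g < n"
    show "card (S g) = k + (if g \<in> T then 0 else 1)"
    proof -
      have "card (insert 0 (Sline 4 (k-1))) = k"
        using Sline_0_notin[of 4 "k-1"] card_Sline[of 4 "k-1"] k by (simp add: Sline_def)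
      then show ?thesis using k by (simp add: S_def card_Sline)
    qed
  qed
  finally show ?thesis using sdn_le[OF FP] by (simp add: m_def)
qed

lemma upper2_gen:
  fixes F :: "nat \<Rightarrow> nat"
  assumes n: "0 < n" and k: "1 \<le> k" and T: "T \<subseteq> {0..<n}"
    and Fd: "F = (\<lambda>g. if g < n then (if g mod 2 = e then 0 else if (g div 2) mod 2 = 0 then 0 else 1) else undefined)"
    and H: "\<And>g. g \<in> T \<Longrightarrow> g mod 2 = e \<and> cpred n g \<notin> T \<and> csuc n g \<notin> T \<and> F (cpred n g) \<noteq> F (csuc n g)"
  shows "sierpinski_domination_number (cycle_graph n) (cycle_graph (3*k+2)) \<le> k*n + card ({0..<n} - T)"
proof -
  define m where "m = 3*k+2"
  define S where "S = (\<lambda>g. if g \<in> T then Sline 3 k else Sline 0 (k+1))"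
  have FV: "\<And>g. g < n \<Longrightarrow> F g = 0 \<or> F g = 1" using Fd by simp
  have FP: "F \<in> verts (cycle_graph n) \<rightarrow>\<^sub>E verts (cycle_graph m)"
    by (rule F_PiE) (use k in \<open>auto simp: Fd m_def\<close>)
  have S3: "Sline 3 k \<subseteq> {0..<m}" by (rule Sline_sub) (simp add: m_def)
  have S0: "Sline 0 (k+1) \<subseteq> {0..<m}" by (rule Sline_sub) (simp add: m_def)
  have z: "0 \<in> Sline 0 (k+1)" unfolding Sline_def by (intro image_eqI[of _ _ 0]) auto
  have "dominating_set (SP n m F) (Sigma {0..<n} S)"
  proof (rule dom_generic)
    show "\<And>g. g < n \<Longrightarrow> S g \<subseteq> {0..<m}" using S3 S0 by (simp add: S_def)
    fix g h assume g: "g < n" and h: "h < m"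
    show "h \<in> S g \<or> (\<exists>u \<in> S g. Suc u mod m = h \<or> Suc h mod m = u)
        \<or> (\<exists>g'. g' < n \<and> (Suc g' mod n = g \<or> Suc g mod n = g') \<and> F g' = h \<and> F g \<in> S g')"
    proof (cases "g \<in> T")
      case False
      then have "h \<in> S g \<or> (\<exists>u \<in> S g. Suc u mod m = h \<or> Suc h mod m = u)"
        using Sline_cover[of 0 h "k+1" m] h by (simp add: S_def m_def)
      then show ?thesis by (rule or3)
    next
      case True
      note Hg = H[OF True]
      show ?thesis
      proof (cases "2 \<le> h")
        case True
        then have "h \<in> S g \<or> (\<exists>u \<in> S g. Suc u mod m = h \<or> Suc h mod m = u)"
          using Sline_cover[of 3 h k m] h \<open>g \<in> T\<close> by (simp add: S_def m_def)
        then show ?thesis by (rule or3)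
      next
        case False
        have Fg: "F g = 0" using Hg g Fd by simp
        have p1: "cpred n g < n" "csuc n g < n" using cpred_lt[OF n] csuc_lt[OF n] by auto
        have "h = F (cpred n g) \<or> h = F (csuc n g)"
          using FV[OF p1(1)] FV[OF p1(2)] Hg False by auto
        then show ?thesis
        proof
          assume hp: "h = F (cpred n g)"
          have "Suc (cpred n g) mod n = g" using csuc_cpred[OF g] by (simp add: csuc_def)
          moreover have "F g \<in> S (cpred n g)" using Hg Fg z by (simp add: S_def)
          ultimately show ?thesis using hp p1 by (intro or3c exI[of _ "cpred n g"]) simp
        next
          assume hp: "h = F (csuc n g)"
          have "Suc g mod n = csuc n g" by (simp add: csuc_def)
          moreover have "F g \<in> S (csuc n g)" using Hg Fg z by (simp add: S_def)
          ultimately show ?thesis using hp p1 by (intro or3c exI[of _ "csuc n g"]) simp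
        qed
      qed
    qed
  qed
  then have "domination_number (SP n m F) \<le> (\<Sum>g\<in>{0..<n}. card (S g))"
    by (rule dn_Sigma_le) (simp add: S_def Sline_def)
  also have "\<dots> = k*n + card ({0..<n} - T)"
  proof (rule sum_tight)
    fix g assume "g < n"
    show "card (S g) = k + (if g \<in> T then 0 else 1)" by (simp add: S_def card_Sline)
  qed
  finally show ?thesis using sdn_le[OF FP] by (simp add: m_def)
qed

lemma lowerS:
  assumes n: "0 < n" and m: "m = 3*k + p" "p \<le> 2" and k: "1 \<le> k"
  shows "k*n + (if p = 2 then n - n div 2 else 0) \<le> sierpinski_domination_number (cycle_graph n) (cycle_graph m)"
proof (rule sdn_ge)
  show "(\<lambda>g. if g < n then 0 else undefined) \<in> verts (cycle_graph n) \<rightarrow>\<^sub>E verts (cycle_graph m)"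
    by (rule F_PiE) (use m k in auto)
  fix f assume "f \<in> verts (cycle_graph n) \<rightarrow>\<^sub>E verts (cycle_graph m)"
  show "k*n + (if p = 2 then n - n div 2 else 0) \<le> domination_number (SP n m f)"
  proof (rule dn_ge)
    show "finite (verts (SP n m f))" by (simp add: verts_SP)
    fix D assume "dominating_set (SP n m f) D" "finite D"
    then show "k*n + (if p = 2 then n - n div 2 else 0) \<le> card D" using lower[OF _ n m] by blast
  qed
qed

lemma dv2: "2 \<le> (g::nat) \<Longrightarrow> ((g div 2) mod 2 = 0) = (\<not> ((g - 2) div 2) mod 2 = 0)" by presburger

lemma upper1_general:
  assumes n: "3 \<le> n" and k: "1 \<le> k"
  shows "sierpinski_domination_number (cycle_graph n) (cycle_graph (3*k+1)) \<le> k*n + 1"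
proof -
  define F :: "nat \<Rightarrow> nat" where "F = (\<lambda>g. if g < n then (if (g div 2) mod 2 = 0 then 0 else 2) else undefined)"
  have "sierpinski_domination_number (cycle_graph n) (cycle_graph (3*k+1)) \<le> k*n + card ({0..<n} - {1..<n})"
  proof (rule upper1_gen[OF _ k _ F_def])
    show "0 < n" using n by simp
    show "{1..<n} \<subseteq> {0..<n}" by auto
    fix g assume g: "g \<in> {1..<n}"
    show "if cpred n g \<in> {1..<n} then F g \<noteq> F (cpred n (cpred n g)) else F g = 0"
    proof (cases "g = 1")
      case True
      then have "cpred n g = 0" using cpred_pos[of 1 n] n by simp
      then show ?thesis using True n by (simp add: F_def)
    next
      case False
      then have g2: "2 \<le> g" "g < n" using g by auto
      then have c1: "cpred n g = g - 1" using cpred_pos by simp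
      then have c2: "cpred n (cpred n g) = g - 2" using cpred_pos[of "g-1" n] g2 by simp
      have "g - 2 < n" using g2 by simp
      then have "F g \<noteq> F (g - 2)" using dv2[OF g2(1)] g2 by (simp add: F_def)
      moreover have "cpred n g \<in> {1..<n}" using c1 g2 by auto
      ultimately show ?thesis using c2 by simp
    qed
  qed
  moreover have "{0..<n} - {1..<n} = {0}" using n by auto
  ultimately show ?thesis by simp
qed

lemma upper1_4:
  assumes n: "3 \<le> n" "n mod 4 = 0" and k: "1 \<le> k"
  shows "sierpinski_domination_number (cycle_graph n) (cycle_graph (3*k+1)) \<le> k*n"
proof -
  define F :: "nat \<Rightarrow> nat" where "F = (\<lambda>g. if g < n then (if (g div 2) mod 2 = 0 then 0 else 2) else undefined)"
  have "sierpinski_domination_number (cycle_graph n) (cycle_graph (3*k+1)) \<le> k*n + card ({0..<n} - {0..<n})"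
  proof (rule upper1_gen[OF _ k _ F_def])
    show "0 < n" using n by simp
    show "{0..<n} \<subseteq> {0..<n}" by auto
    fix g assume g: "g \<in> {0..<n}"
    have cp: "cpred n g \<in> {0..<n}" using cpred_lt[of n g] n by simp
    have n1: "((n - 1) div 2) mod 2 = 1" "((n - 2) div 2) mod 2 = 1" using n by presburger+
    have "F g \<noteq> F (cpred n (cpred n g))"
    proof -
      consider "g = 0" | "g = 1" | "2 \<le> g" by linarith
      then show ?thesis
      proof cases
        case 1
        then have "cpred n (cpred n g) = n - 2" using cpred_0[of n] cpred_pos[of "n-1" n] n by simp
        then show ?thesis using 1 n n1 by (simp add: F_def)
      next
        case 2
        then have "cpred n (cpred n g) = n - 1" using cpred_0[of n] cpred_pos[of 1 n] n by simp
        then show ?thesis using 2 n n1 by (simp add: F_def)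
      next
        case 3
        then have "cpred n (cpred n g) = g - 2" using cpred_pos[of g n] cpred_pos[of "g-1" n] g by simp
        moreover have "g - 2 < n" using g by simp
        ultimately show ?thesis using dv2[OF 3] 3 g by (simp add: F_def)
      qed
    qed
    then show "if cpred n g \<in> {0..<n} then F g \<noteq> F (cpred n (cpred n g)) else F g = 0"
      using cp by simp
  qed
  then show ?thesis by simp
qed

lemma dvpm: "1 \<le> (g::nat) \<Longrightarrow> (((g - 1) div 2) mod 2 = 0) = (\<not> ((g + 1) div 2) mod 2 = 0)" by presburger

lemma card_odds: "card ({0..<n} - {g \<in> {0..<n}. g mod 2 = 0}) \<le> n div 2 + n mod 2"
proof -
  have "{0..<n} - {g \<in> {0..<n}. g mod 2 = 0} \<subseteq> (\<lambda>i. 2*i+1) ` {..<n div 2 + n mod 2}"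
  proof
    fix x assume "x \<in> {0..<n} - {g \<in> {0..<n}. g mod 2 = 0}"
    then have x: "x < n" "x mod 2 = 1" by auto
    then have "x = 2*(x div 2)+1" "x div 2 < n div 2 + n mod 2" by presburger+
    then show "x \<in> (\<lambda>i. 2*i+1) ` {..<n div 2 + n mod 2}" by blast
  qed
  then have "card ({0..<n} - {g \<in> {0..<n}. g mod 2 = 0}) \<le> card ((\<lambda>i. 2*i+1) ` {..<n div 2 + n mod 2})"
    by (rule card_mono[rotated]) simp
  also have "\<dots> \<le> n div 2 + n mod 2" using card_image_le[of "{..<n div 2 + n mod 2}" "\<lambda>i. 2*i+1"] by simp
  finally show ?thesis .
qed

lemma upper2_4:
  assumes n: "3 \<le> n" "n mod 4 = 0" and k: "1 \<le> k"
  shows "sierpinski_domination_number (cycle_graph n) (cycle_graph (3*k+2)) \<le> k*n + n div 2"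
proof -
  define F :: "nat \<Rightarrow> nat" where "F = (\<lambda>g. if g < n then (if g mod 2 = 0 then 0 else if (g div 2) mod 2 = 0 then 0 else 1) else undefined)"
  define T where "T = {g \<in> {0..<n}. g mod 2 = 0}"
  have "sierpinski_domination_number (cycle_graph n) (cycle_graph (3*k+2)) \<le> k*n + card ({0..<n} - T)"
  proof (rule upper2_gen[OF _ k _ F_def])
    show "0 < n" using n by simp
    show "T \<subseteq> {0..<n}" by (auto simp: T_def)
    fix g assume g: "g \<in> T"
    then have g2: "g mod 2 = 0" "g < n" by (auto simp: T_def)
    have sg: "Suc g < n" using g2 n by presburger
    then have cs: "csuc n g = Suc g" by (rule csuc_lt')
    have "cpred n g \<notin> T \<and> F (cpred n g) \<noteq> F (csuc n g)"
    proof (cases "g = 0")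
      case True
      then have cp: "cpred n g = n - 1" using cpred_0[of n] n by simp
      have n1: "(n - 1) mod 2 = 1" "((n - 1) div 2) mod 2 = 1" using n by presburger+
      show ?thesis using True cp cs n1 n by (simp add: F_def T_def)
    next
      case False
      then have cp: "cpred n g = g - 1" using cpred_pos g2 by simp
      have o: "(g - 1) mod 2 = 1" "(g + 1) mod 2 = 1" using g2 False by presburger+
      have "g - 1 < n" using g2 by simp
      then show ?thesis using cp cs o dvpm[of g] False g2 sg by (simp add: F_def T_def)
    qed
    moreover have "Suc g mod 2 = 1" using g2 by presburger
    then have "csuc n g \<notin> T" using cs g2 by (simp add: T_def)
    ultimately show "g mod 2 = 0 \<and> cpred n g \<notin> T \<and> csuc n g \<notin> T \<and> F (cpred n g) \<noteq> F (csuc n g)"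
      using g2 by simp
  qed
  moreover have "card ({0..<n} - T) \<le> n div 2" using card_odds[of n] n unfolding T_def by presburger
  ultimately show ?thesis by linarith
qed

lemma upper2_even:
  assumes n: "3 \<le> n" "n mod 2 = 0" and k: "1 \<le> k"
  shows "sierpinski_domination_number (cycle_graph n) (cycle_graph (3*k+2)) \<le> k*n + n div 2 + 1"
proof -
  define F :: "nat \<Rightarrow> nat" where "F = (\<lambda>g. if g < n then (if g mod 2 = 0 then 0 else if (g div 2) mod 2 = 0 then 0 else 1) else undefined)"
  define T where "T = {g \<in> {0..<n}. g mod 2 = 0 \<and> 0 < g}"
  have "sierpinski_domination_number (cycle_graph n) (cycle_graph (3*k+2)) \<le> k*n + card ({0..<n} - T)"
  proof (rule upper2_gen[OF _ k _ F_def])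
    show "0 < n" using n by simp
    show "T \<subseteq> {0..<n}" by (auto simp: T_def)
    fix g assume g: "g \<in> T"
    then have g2: "g mod 2 = 0" "g < n" "0 < g" by (auto simp: T_def)
    have sg: "Suc g < n" using g2 n by presburger
    then have cs: "csuc n g = Suc g" by (rule csuc_lt')
    have cp: "cpred n g = g - 1" using cpred_pos g2 by simp
    have o: "(g - 1) mod 2 = 1" "(g + 1) mod 2 = 1" using g2 by presburger+
    have "g - 1 < n" using g2 by simp
    then have "cpred n g \<notin> T \<and> F (cpred n g) \<noteq> F (csuc n g)"
      using cp cs o dvpm[of g] g2 sg by (simp add: F_def T_def)
    moreover have "csuc n g \<notin> T" using cs o by (simp add: T_def)
    ultimately show "g mod 2 = 0 \<and> cpred n g \<notin> T \<and> csuc n g \<notin> T \<and> F (cpred n g) \<noteq> F (csuc n g)"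
      using g2 by simp
  qed
  moreover have "card ({0..<n} - T) \<le> n div 2 + 1"
  proof -
    have "{0..<n} - T \<subseteq> insert 0 ({0..<n} - {g \<in> {0..<n}. g mod 2 = 0})" by (auto simp: T_def)
    then have "card ({0..<n} - T) \<le> card (insert 0 ({0..<n} - {g \<in> {0..<n}. g mod 2 = 0}))"
      by (rule card_mono[rotated]) simp
    also have "\<dots> \<le> card ({0..<n} - {g \<in> {0..<n}. g mod 2 = 0}) + 1" by (simp add: card_insert_if)
    finally show ?thesis using card_odds[of n] n by simp
  qed
  ultimately show ?thesis by linarith
qed

lemma upper2_odd:
  assumes n: "3 \<le> n" "n mod 2 = 1" and k: "1 \<le> k"
  shows "sierpinski_domination_number (cycle_graph n) (cycle_graph (3*k+2)) \<le> k*n + n div 2 + 1"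
proof -
  define F :: "nat \<Rightarrow> nat" where "F = (\<lambda>g. if g < n then (if g mod 2 = 1 then 0 else if (g div 2) mod 2 = 0 then 0 else 1) else undefined)"
  define T where "T = {g \<in> {0..<n}. g mod 2 = 1}"
  have "sierpinski_domination_number (cycle_graph n) (cycle_graph (3*k+2)) \<le> k*n + card ({0..<n} - T)"
  proof (rule upper2_gen[OF _ k _ F_def])
    show "0 < n" using n by simp
    show "T \<subseteq> {0..<n}" by (auto simp: T_def)
    fix g assume g: "g \<in> T"
    then have g2: "g mod 2 = 1" "g < n" by (auto simp: T_def)
    have g0: "0 < g" using g2 by presburger
    have sg: "Suc g < n" using g2 n by presburger
    then have cs: "csuc n g = Suc g" by (rule csuc_lt')
    have cp: "cpred n g = g - 1" using cpred_pos g2 g0 by simp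
    have o: "(g - 1) mod 2 = 0" "(g + 1) mod 2 = 0" using g2 by presburger+
    have "g - 1 < n" using g2 by simp
    then have "cpred n g \<notin> T \<and> F (cpred n g) \<noteq> F (csuc n g)"
      using cp cs o dvpm[of g] g2 g0 sg by (simp add: F_def T_def)
    moreover have "csuc n g \<notin> T" using cs o by (simp add: T_def)
    ultimately show "g mod 2 = 1 \<and> cpred n g \<notin> T \<and> csuc n g \<notin> T \<and> F (cpred n g) \<noteq> F (csuc n g)"
      using g2 by simp
  qed
  moreover have "card ({0..<n} - T) \<le> n div 2 + 1"
  proof -
    have "{0..<n} - T \<subseteq> (\<lambda>i. 2*i) ` {..<n div 2 + 1}"
    proof
      fix x assume "x \<in> {0..<n} - T"
      then have x: "x < n" "x mod 2 = 0" by (auto simp: T_def)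
      then have "x = 2*(x div 2)" "x div 2 < n div 2 + 1" by presburger+
      then show "x \<in> (\<lambda>i. 2*i) ` {..<n div 2 + 1}" by blast
    qed
    then have "card ({0..<n} - T) \<le> card ((\<lambda>i. 2*i) ` {..<n div 2 + 1})"
      by (rule card_mono[rotated]) simp
    also have "\<dots> \<le> n div 2 + 1" using card_image_le[of "{..<n div 2 + 1}" "\<lambda>i. 2*i"] by simp
    finally show ?thesis .
  qed
  ultimately show ?thesis by linarith
qed

lemma upper2_general:
  assumes n: "3 \<le> n" and k: "1 \<le> k"
  shows "sierpinski_domination_number (cycle_graph n) (cycle_graph (3*k+2)) \<le> k*n + n div 2 + 1"
proof (cases "n mod 2 = 0")
  case True show ?thesis using upper2_even[OF n True k] .
next
  case False then have "n mod 2 = 1" by simp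
  then show ?thesis using upper2_odd[OF n _ k] by blast
qed

theorem theorem3p1:
  fixes n k p :: nat
  assumes "n \<ge> 3" and "k \<ge> 1" and "p \<in> {0, 1, 2}"
  shows "sierpinski_domination_number (cycle_graph n) (cycle_graph (3 * k + p)) \<in>
           (if p = 0 then {k * n}
            else if p = 1 then {k * n, k * n + 1}
            else {k * n + n div 2, k * n + n div 2 + 1}) \<and>
         (n mod 4 = 0 \<longrightarrow>
           sierpinski_domination_number (cycle_graph n) (cycle_graph (3 * k + 1)) = k * n \<and>
           sierpinski_domination_number (cycle_graph n) (cycle_graph (3 * k + 2)) = k * n + n div 2)"
proof -
  have n0: "0 < n" using assms by simp
  have L0: "k*n \<le> sierpinski_domination_number (cycle_graph n) (cycle_graph (3*k))"
    using lowerS[OF n0, of "3*k" k 0] assms by simp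
  have L1: "k*n \<le> sierpinski_domination_number (cycle_graph n) (cycle_graph (3*k+1))"
    using lowerS[OF n0, of "3*k+1" k 1] assms by simp
  have L2: "k*n + (n - n div 2) \<le> sierpinski_domination_number (cycle_graph n) (cycle_graph (3*k+2))"
    using lowerS[OF n0, of "3*k+2" k 2] assms by simp
  have U0: "sierpinski_domination_number (cycle_graph n) (cycle_graph (3*k)) \<le> k*n"
    using upper0[OF n0] assms by simp
  have U1: "sierpinski_domination_number (cycle_graph n) (cycle_graph (3*k+1)) \<le> k*n + 1"
    using upper1_general assms by simp
  have U2: "sierpinski_domination_number (cycle_graph n) (cycle_graph (3*k+2)) \<le> k*n + n div 2 + 1"
    using upper2_general assms by simp
  have hd: "n div 2 \<le> n - n div 2" by simp
  have part1: "sierpinski_domination_number (cycle_graph n) (cycle_graph (3 * k + p)) \<in>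
           (if p = 0 then {k * n}
            else if p = 1 then {k * n, k * n + 1}
            else {k * n + n div 2, k * n + n div 2 + 1})"
  proof -
    consider "p = 0" | "p = 1" | "p = 2" using assms(3) by blast
    then show ?thesis
    proof cases
      case 1 then show ?thesis using L0 U0 by simp
    next
      case 2 then show ?thesis using L1 U1 by auto
    next
      case 3 then show ?thesis using L2 U2 hd by auto
    qed
  qed
  have part2: "n mod 4 = 0 \<longrightarrow>
           sierpinski_domination_number (cycle_graph n) (cycle_graph (3 * k + 1)) = k * n \<and>
           sierpinski_domination_number (cycle_graph n) (cycle_graph (3 * k + 2)) = k * n + n div 2"
  proof
    assume n4: "n mod 4 = 0"
    have "sierpinski_domination_number (cycle_graph n) (cycle_graph (3*k+1)) \<le> k*n"
      using upper1_4[OF assms(1) n4 assms(2)] .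
    moreover have "sierpinski_domination_number (cycle_graph n) (cycle_graph (3*k+2)) \<le> k*n + n div 2"
      using upper2_4[OF assms(1) n4 assms(2)] .
    moreover have "n - n div 2 = n div 2" using n4 by presburger
    ultimately show "sierpinski_domination_number (cycle_graph n) (cycle_graph (3 * k + 1)) = k * n \<and>
           sierpinski_domination_number (cycle_graph n) (cycle_graph (3 * k + 2)) = k * n + n div 2"
      using L1 L2 by simp
  qed
  show ?thesis using part1 part2 by blast
qed

end
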